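(* Let $\psi(u,v)$ be a satisfiable conjunction of difference constraints between two integer variables $u,v$ such that every pair satisfying $\psi$ has $u\le v$ and $\psi(m,m)$ holds for every integer $m$ (i.e. $\psi$ contains $u\le v$ but no conjunct $u\le v-c$ with $c>0$). Let $n\ge3$. Then $\exists S_3,\dots,S_{n-1}.\ \bigwedge_{2\le i\le n-1}\Big(S_i=S_{i+1}\cup\{\min(S_i)\}\wedge\max(S_i)=\max(S_{i+1})\wedge\psi(\min(S_i),\min(S_{i+1}))\Big)$ is equivalent to $S_n\neq\emptyset\wedge S_n\subseteq S_2\wedge|S_2\setminus S_n|\le n-2\wedge\big(S_2\setminus S_n\neq\emptyset\rightarrow\max(S_2\setminus S_n)<\min(S_n)\big)\wedge\forall y,z.\ \big(\mathsf{succ}((S_2\setminus S_n)\cup\{\min(S_n)\},y,z)\rightarrow\psi(y,z)\big)$.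
   Context: Set variables range over finite subsets of $\mathbb{Z}$, integer variables over $\mathbb{Z}$; $\min,\max$ of the empty set are undefined and atoms containing undefined terms are false. $\mathsf{succ}(S,x,y)$ abbreviates $x\in S\wedge y\in S\wedge x<y\wedge\forall z\in S.\,(z\le x\vee y\le z)$. $|\cdot|$ is cardinality. *)

theory Defs
  imports Main
begin

datatype var2 = U | V

text \<open>A difference constraint (x, y, c) stands for x - y \<le> c, where x, y range over the
  two integer variables u, v. A conjunction of difference constraints is a finite list of them.\<close>
type_synonym dconstr = "var2 \<times> var2 \<times> int"

fun val2 :: "int \<Rightarrow> int \<Rightarrow> var2 \<Rightarrow> int" where
  "val2 u v U = u"
| "val2 u v V = v"

definition holds_conj :: "dconstr list \<Rightarrow> int \<Rightarrow> int \<Rightarrow> bool" where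
  "holds_conj cs u v \<longleftrightarrow> (\<forall>(x, y, c) \<in> set cs. val2 u v x - val2 u v y \<le> c)"

definition succ_in :: "int set \<Rightarrow> int \<Rightarrow> int \<Rightarrow> bool" where
  "succ_in S x y \<longleftrightarrow> x \<in> S \<and> y \<in> S \<and> x < y \<and> (\<forall>z\<in>S. z \<le> x \<or> y \<le> z)"

end

theory Submission
  imports Defs
begin

definition stepF :: "dconstr list \<Rightarrow> int set \<Rightarrow> int set \<Rightarrow> bool" where
"stepF cs A C \<longleftrightarrow> (A \<noteq> {} \<and> A = C \<union> {Min A}) \<and> (A \<noteq> {} \<and> C \<noteq> {} \<and> Max A = Max C) \<and>
   (A \<noteq> {} \<and> C \<noteq> {} \<and> holds_conj cs (Min A) (Min C))"

definition stp :: "dconstr list \<Rightarrow> int set \<Rightarrow> int set \<Rightarrow> bool" where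
"stp cs A C \<longleftrightarrow> A \<noteq> {} \<and> C \<noteq> {} \<and> A = C \<union> {Min A} \<and> holds_conj cs (Min A) (Min C)"

lemma stepF_stp: "finite A \<Longrightarrow> finite C \<Longrightarrow> stepF cs A C \<longleftrightarrow> stp cs A C"
proof
  assume "stepF cs A C" thus "stp cs A C" unfolding stepF_def stp_def by blast
next
  assume fa: "finite A" and fc: "finite C" and s: "stp cs A C"
  hence ne: "A \<noteq> {}" "C \<noteq> {}" and eq: "A = C \<union> {Min A}" unfolding stp_def by auto
  have "Min A \<le> Max C" using fa fc ne eq
    by (metis Max_in Min_le Un_iff)
  moreover have "Max A = max (Min A) (Max C)"
  proof -
    have "Max A = Max (insert (Min A) C)" using eq by simp
    also have "\<dots> = max (Min A) (Max C)" using fc ne by (simp add: Max_insert)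
    finally show ?thesis .
  qed
  ultimately have "Max A = Max C" by simp
  thus "stepF cs A C" using s unfolding stepF_def stp_def by blast
qed

fun pth :: "dconstr list \<Rightarrow> nat \<Rightarrow> int set \<Rightarrow> int set \<Rightarrow> bool" where
  "pth cs 0 A B = (A = B \<and> finite A)"
| "pth cs (Suc k) A B = (\<exists>C. finite A \<and> finite C \<and> stepF cs A C \<and> pth cs k C B)"

lemma path_pth:
  "a \<ge> 1 \<Longrightarrow> (\<exists>S. S a = A \<and> S (a+k) = B \<and> (\<forall>i\<in>{a..a+k}. finite (S i)) \<and>
     (\<forall>i\<in>{a..a+k-1}. stepF cs (S i) (S (Suc i)))) \<longleftrightarrow> pth cs k A B"
proof (induction k arbitrary: a A)
  case 0
  then show ?case by auto
next
  case (Suc k)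
  show ?case
  proof
    assume "\<exists>S. S a = A \<and> S (a+Suc k) = B \<and> (\<forall>i\<in>{a..a+Suc k}. finite (S i)) \<and>
     (\<forall>i\<in>{a..a+Suc k-1}. stepF cs (S i) (S (Suc i)))"
    then obtain S where S: "S a = A" "S (a+Suc k) = B" "\<forall>i\<in>{a..a+Suc k}. finite (S i)"
      "\<forall>i\<in>{a..a+Suc k-1}. stepF cs (S i) (S (Suc i))" by blast
    have "\<exists>S'. S' (Suc a) = S (Suc a) \<and> S' (Suc a+k) = B \<and> (\<forall>i\<in>{Suc a..Suc a+k}. finite (S' i)) \<and>
     (\<forall>i\<in>{Suc a..Suc a+k-1}. stepF cs (S' i) (S' (Suc i)))"
      by (rule exI[of _ S]) (use S in auto)
    hence "pth cs k (S (Suc a)) B" using Suc.IH[of "Suc a" "S (Suc a)"] by simp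
    moreover have "finite A" "finite (S (Suc a))" "stepF cs A (S (Suc a))" using S by auto
    ultimately show "pth cs (Suc k) A B" by auto
  next
    assume "pth cs (Suc k) A B"
    then obtain C where C: "finite A" "finite C" "stepF cs A C" "pth cs k C B" by auto
    then obtain S where S: "S (Suc a) = C" "S (Suc a+k) = B" "\<forall>i\<in>{Suc a..Suc a+k}. finite (S i)"
      "\<forall>i\<in>{Suc a..Suc a+k-1}. stepF cs (S i) (S (Suc i))"
      using Suc.IH[of "Suc a" C] by auto
    let ?S = "S(a := A)"
    have "?S a = A" "?S (a + Suc k) = B" using S by auto
    moreover have "\<forall>i\<in>{a..a+Suc k}. finite (?S i)"
    proof
      fix i assume "i \<in> {a..a+Suc k}"
      thus "finite (?S i)" using S C by (cases "i = a") auto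
    qed
    moreover have "\<forall>i\<in>{a..a+Suc k-1}. stepF cs (?S i) (?S (Suc i))"
    proof
      fix i assume i: "i \<in> {a..a+Suc k-1}"
      show "stepF cs (?S i) (?S (Suc i))"
      proof (cases "i = a")
        case True thus ?thesis using S C by auto
      next
        case False thus ?thesis using S i by auto
      qed
    qed
    ultimately show "\<exists>S. S a = A \<and> S (a+Suc k) = B \<and> (\<forall>i\<in>{a..a+Suc k}. finite (S i)) \<and>
     (\<forall>i\<in>{a..a+Suc k-1}. stepF cs (S i) (S (Suc i)))" by blast
  qed
qed

lemma succ_dec:
  assumes fT: "finite T" and ne: "T - {Min T} \<noteq> {}"
  shows "succ_in T y z \<longleftrightarrow> (y = Min T \<and> z = Min (T - {Min T})) \<or> succ_in (T - {Min T}) y z"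
proof -
  let ?x = "Min T" let ?T' = "T - {Min T}"
  have fT': "finite ?T'" using fT by simp
  have Tne: "T \<noteq> {}" using ne by auto
  have xin: "?x \<in> T" using fT Tne by simp
  have xle: "\<And>w. w \<in> T \<Longrightarrow> ?x \<le> w" using fT by simp
  have m'in: "Min ?T' \<in> ?T'" using Min_in[OF fT' ne] .
  have m'le: "\<And>w. w \<in> ?T' \<Longrightarrow> Min ?T' \<le> w" using fT' by simp
  have xlt: "?x < Min ?T'" using m'in xle[of "Min ?T'"] by auto
  show ?thesis
  proof
    assume s: "succ_in T y z"
    show "(y = ?x \<and> z = Min ?T') \<or> succ_in ?T' y z"
    proof (cases "y = ?x")
      case True
      have zT': "z \<in> ?T'" using s True unfolding succ_in_def by auto
      have "Min ?T' \<le> ?x \<or> z \<le> Min ?T'" using s True m'in unfolding succ_in_def by auto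
      hence "z = Min ?T'" using xlt m'le[OF zT'] by auto
      thus ?thesis using True by simp
    next
      case False
      hence "succ_in ?T' y z" using s xle unfolding succ_in_def by force
      thus ?thesis by simp
    qed
  next
    assume "(y = ?x \<and> z = Min ?T') \<or> succ_in ?T' y z"
    thus "succ_in T y z"
    proof
      assume a: "y = ?x \<and> z = Min ?T'"
      show ?thesis unfolding succ_in_def using a xin m'in xlt m'le by auto
    next
      assume a: "succ_in ?T' y z"
      show ?thesis using a xle unfolding succ_in_def by auto
    qed
  qed
qed

lemma min_split:
  assumes "finite C" "B \<subseteq> C" "B \<noteq> {}"
  shows "Min C = Min ((C - B) \<union> {Min B})"
proof (rule antisym)
  have fB: "finite B" using assms finite_subset by blast
  have mB: "Min B \<in> B" using fB assms by simp
  show "Min C \<le> Min ((C - B) \<union> {Min B})"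
    using assms mB by (intro Min_antimono) auto
  have "C \<noteq> {}" using assms by auto
  hence mC: "Min C \<in> C" using assms Min_in by blast
  have f2: "finite ((C - B) \<union> {Min B})" using assms by simp
  show "Min ((C - B) \<union> {Min B}) \<le> Min C"
  proof (cases "Min C \<in> B")
    case True
    hence "Min B \<le> Min C" using fB by simp
    moreover have "Min ((C - B) \<union> {Min B}) \<le> Min B" using f2 by simp
    ultimately show ?thesis by simp
  next
    case False
    thus ?thesis using f2 mC by simp
  qed
qed

definition R :: "dconstr list \<Rightarrow> nat \<Rightarrow> int set \<Rightarrow> int set \<Rightarrow> bool" where
"R cs k A B \<longleftrightarrow> B \<noteq> {} \<and> B \<subseteq> A \<and> card (A - B) \<le> k \<and>
          (A - B \<noteq> {} \<longrightarrow> Max (A - B) < Min B) \<and>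
          (\<forall>y z. succ_in ((A - B) \<union> {Min B}) y z \<longrightarrow> holds_conj cs y z)"

lemma KL:
  assumes refl: "\<forall>m. holds_conj cs m m" and fA: "finite A" and fB: "finite B"
  shows "(\<exists>C. finite C \<and> stp cs A C \<and> R cs k C B) \<longleftrightarrow> R cs (Suc k) A B"
proof
  assume "\<exists>C. finite C \<and> stp cs A C \<and> R cs k C B"
  then obtain C where fC: "finite C" and st: "stp cs A C" and r: "R cs k C B" by blast
  have Ane: "A \<noteq> {}" and Cne: "C \<noteq> {}" and AC: "A = C \<union> {Min A}"
    and ps: "holds_conj cs (Min A) (Min C)" using st unfolding stp_def by auto
  have Bne: "B \<noteq> {}" and BC: "B \<subseteq> C" and cd: "card (C - B) \<le> k"
    and mx: "C - B \<noteq> {} \<longrightarrow> Max (C - B) < Min B"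
    and sc: "\<forall>y z. succ_in ((C - B) \<union> {Min B}) y z \<longrightarrow> holds_conj cs y z"
    using r unfolding R_def by auto
  let ?m = "Min A"
  show "R cs (Suc k) A B"
  proof (cases "?m \<in> C")
    case True
    hence "A = C" using AC by (simp add: insert_absorb)
    thus ?thesis using r cd unfolding R_def by auto
  next
    case False
    have mB: "?m \<notin> B" using False BC by auto
    have BA: "B \<subseteq> A" using BC AC by auto
    have minB: "Min B \<in> B" using fB Bne by simp
    have mle: "\<And>w. w \<in> A \<Longrightarrow> ?m \<le> w" using fA by simp
    have mlt: "?m < Min B" proof -
      have "Min B \<in> A" using minB BA by blast
      hence "?m \<le> Min B" by (rule mle)
      moreover have "?m \<noteq> Min B" using minB mB by metis
      ultimately show ?thesis by simp
    qed
    have AB: "A - B = insert ?m (C - B)" using AC mB BC by auto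
    have card1: "card (A - B) = Suc (card (C - B))" using AB False fC by simp
    have mx2: "A - B \<noteq> {} \<longrightarrow> Max (A - B) < Min B"
    proof (cases "C - B = {}")
      case True
      hence "A - B = {?m}" using AB by auto
      thus ?thesis using mlt by simp
    next
      case False thus ?thesis using AB mlt mx fC by simp
    qed
    let ?TA = "(A - B) \<union> {Min B}" let ?TC = "(C - B) \<union> {Min B}"
    have fTA: "finite ?TA" using fA by simp
    have mTA: "?m \<in> ?TA" using AB by simp
    have TAsub: "?TA \<subseteq> A" using BA minB by auto
    have minTA: "Min ?TA = ?m"
    proof (rule antisym)
      show "Min ?TA \<le> ?m" using fTA mTA by simp
      show "?m \<le> Min ?TA" using fTA mTA TAsub mle by (simp add: Min_in subset_iff)
    qed
    have TAC: "?TA - {Min ?TA} = ?TC" using minTA AB False mlt by auto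
    have TCne: "?TC \<noteq> {}" by simp
    have minTC: "Min ?TC = Min C" using min_split[OF fC BC Bne] by simp
    have "\<forall>y z. succ_in ?TA y z \<longrightarrow> holds_conj cs y z"
    proof (intro allI impI)
      fix y z assume "succ_in ?TA y z"
      hence "(y = Min ?TA \<and> z = Min (?TA - {Min ?TA})) \<or> succ_in (?TA - {Min ?TA}) y z"
        using succ_dec[OF fTA] TAC TCne by blast
      thus "holds_conj cs y z" using TAC minTA minTC ps sc by auto
    qed
    thus ?thesis unfolding R_def using Bne BA card1 cd mx2 by auto
  qed
next
  assume r: "R cs (Suc k) A B"
  have Bne: "B \<noteq> {}" and BA: "B \<subseteq> A" and cd: "card (A - B) \<le> Suc k"
    and mx: "A - B \<noteq> {} \<longrightarrow> Max (A - B) < Min B"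
    and sc: "\<forall>y z. succ_in ((A - B) \<union> {Min B}) y z \<longrightarrow> holds_conj cs y z"
    using r unfolding R_def by auto
  have Ane: "A \<noteq> {}" using Bne BA by auto
  let ?m = "Min A"
  have mA: "?m \<in> A" using fA Ane by simp
  have mle: "\<And>w. w \<in> A \<Longrightarrow> ?m \<le> w" using fA by simp
  have minB: "Min B \<in> B" using fB Bne by simp
  show "\<exists>C. finite C \<and> stp cs A C \<and> R cs k C B"
  proof (cases "A = B")
    case True
    have "stp cs A A" unfolding stp_def using Ane mA refl by auto
    moreover have "R cs k A A" unfolding R_def using True Bne
      by (auto simp: succ_in_def)
    ultimately show ?thesis using True fA by blast
  next
    case False
    let ?D = "A - B"
    have Dne: "?D \<noteq> {}" using False BA by auto
    have fD: "finite ?D" using fA by simp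
    have mxD: "Max ?D < Min B" using mx Dne by simp
    have mB: "?m \<notin> B"
    proof
      assume "?m \<in> B"
      hence "Min B \<le> ?m" using fB by simp
      obtain d where d: "d \<in> ?D" using Dne by blast
      have "d \<le> Max ?D" using fD d by simp
      moreover have "?m \<le> d" using d mle by simp
      ultimately show False using mxD \<open>Min B \<le> ?m\<close> by simp
    qed
    let ?C = "A - {?m}"
    have fC: "finite ?C" using fA by simp
    have BC: "B \<subseteq> ?C" using BA mB by auto
    have Cne: "?C \<noteq> {}" using BC Bne by auto
    have AC: "A = ?C \<union> {Min A}" using mA by auto
    let ?TA = "?D \<union> {Min B}" let ?TC = "(?C - B) \<union> {Min B}"
    have fTA: "finite ?TA" using fA by simp
    have mTA: "?m \<in> ?TA" using mA mB by simp
    have TAsub: "?TA \<subseteq> A" using BA minB by auto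
    have minTA: "Min ?TA = ?m"
    proof (rule antisym)
      show "Min ?TA \<le> ?m" using fTA mTA by simp
      show "?m \<le> Min ?TA" using fTA mTA TAsub mle by (simp add: Min_in subset_iff)
    qed
    have mlt: "?m < Min B" proof -
      have "Min B \<in> A" using minB BA by blast
      hence "?m \<le> Min B" by (rule mle)
      moreover have "?m \<noteq> Min B" using minB mB by metis
      ultimately show ?thesis by simp
    qed
    have TAC: "?TA - {Min ?TA} = ?TC" using minTA mlt by auto
    have TCne: "?TC \<noteq> {}" by simp
    have minTC: "Min ?TC = Min ?C" using min_split[OF fC BC Bne] by simp
    have "succ_in ?TA (Min ?TA) (Min (?TA - {Min ?TA}))"
      using succ_dec[OF fTA, of "Min ?TA" "Min (?TA - {Min ?TA})"] TAC TCne by blast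
    hence "holds_conj cs ?m (Min ?C)" using sc minTA TAC minTC by auto
    hence st: "stp cs A ?C" unfolding stp_def using Ane Cne AC by blast
    have CBD: "?C - B = ?D - {?m}" by auto
    have mD: "?m \<in> ?D" using mA mB by simp
    have cdC: "card (?C - B) \<le> k" using CBD cd mD fD by (simp add: card_Diff_singleton)
    have mxC: "?C - B \<noteq> {} \<longrightarrow> Max (?C - B) < Min B"
    proof
      assume ne: "?C - B \<noteq> {}"
      have "Max (?C - B) \<le> Max ?D" using ne fD by (intro Max_mono) auto
      thus "Max (?C - B) < Min B" using mxD by simp
    qed
    have scC: "\<forall>y z. succ_in ?TC y z \<longrightarrow> holds_conj cs y z"
    proof (intro allI impI)
      fix y z assume a: "succ_in ?TC y z"
      have ne2: "?TA - {Min ?TA} \<noteq> {}" using TAC TCne by simp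
      have "succ_in ?TA y z" using succ_dec[OF fTA ne2, of y z] a unfolding TAC by blast
      thus "holds_conj cs y z" using sc by blast
    qed
    have "R cs k ?C B" unfolding R_def using Bne BC cdC mxC scC by blast
    thus ?thesis using fC st by blast
  qed
qed

lemma R0: "finite C \<Longrightarrow> R cs 0 C B \<longleftrightarrow> C = B \<and> B \<noteq> {}"
  unfolding R_def by (auto simp: succ_in_def)

lemma pth_R:
  assumes refl: "\<forall>m. holds_conj cs m m"
  shows "finite A \<Longrightarrow> finite B \<Longrightarrow> pth cs (Suc k) A B \<longleftrightarrow> R cs (Suc k) A B"
proof (induction k arbitrary: A)
  case 0
  have "pth cs (Suc 0) A B \<longleftrightarrow> (\<exists>C. finite C \<and> stp cs A C \<and> R cs 0 C B)"
  proof -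
    have "pth cs (Suc 0) A B \<longleftrightarrow> stepF cs A B" using 0 by simp
    also have "\<dots> \<longleftrightarrow> stp cs A B" using stepF_stp[OF 0(1) 0(2)] .
    also have "\<dots> \<longleftrightarrow> (\<exists>C. finite C \<and> stp cs A C \<and> R cs 0 C B)"
    proof
      assume st: "stp cs A B" show "\<exists>C. finite C \<and> stp cs A C \<and> R cs 0 C B"
      proof -
        have "B \<noteq> {}" using st unfolding stp_def by simp
        hence "R cs 0 B B" using R0[OF 0(2)] by simp
        thus ?thesis using st 0(2) by blast
      qed
    next
      assume "\<exists>C. finite C \<and> stp cs A C \<and> R cs 0 C B"
      then obtain C where fC: "finite C" and st: "stp cs A C" and r: "R cs 0 C B" by blast
      have "C = B" using r R0[OF fC] by simp
      thus "stp cs A B" using st by simp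
    qed
    finally show ?thesis .
  qed
  also have "\<dots> \<longleftrightarrow> R cs (Suc 0) A B" using KL[OF refl 0(1) 0(2)] .
  finally show ?case .
next
  case (Suc k)
  have "pth cs (Suc (Suc k)) A B \<longleftrightarrow> (\<exists>C. finite C \<and> stp cs A C \<and> R cs (Suc k) C B)"
  proof -
    have "pth cs (Suc (Suc k)) A B \<longleftrightarrow> (\<exists>C. finite A \<and> finite C \<and> stepF cs A C \<and> pth cs (Suc k) C B)"
      by simp
    also have "\<dots> \<longleftrightarrow> (\<exists>C. finite C \<and> stp cs A C \<and> R cs (Suc k) C B)"
    proof -
      have eqv: "\<And>C::int set. finite C \<Longrightarrow> (stepF cs A C \<and> pth cs (Suc k) C B) \<longleftrightarrow> (stp cs A C \<and> R cs (Suc k) C B)"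
      proof -
        fix C :: "int set" assume fC: "finite C"
        have e1: "stepF cs A C \<longleftrightarrow> stp cs A C" using stepF_stp[OF Suc.prems(1) fC] .
        have e2: "pth cs (Suc k) C B \<longleftrightarrow> R cs (Suc k) C B" using Suc.IH[OF fC Suc.prems(2)] .
        show "(stepF cs A C \<and> pth cs (Suc k) C B) \<longleftrightarrow> (stp cs A C \<and> R cs (Suc k) C B)"
          by (simp only: e1 e2)
      qed
      show ?thesis
      proof
        assume "\<exists>C. finite A \<and> finite C \<and> stepF cs A C \<and> pth cs (Suc k) C B"
        then obtain C where fC: "finite C" and h: "stepF cs A C \<and> pth cs (Suc k) C B" by blast
        have "stp cs A C \<and> R cs (Suc k) C B" using h eqv[OF fC] by simp
        thus "\<exists>C. finite C \<and> stp cs A C \<and> R cs (Suc k) C B" using fC by blast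
      next
        assume "\<exists>C. finite C \<and> stp cs A C \<and> R cs (Suc k) C B"
        then obtain C where fC: "finite C" and h: "stp cs A C \<and> R cs (Suc k) C B" by blast
        have "stepF cs A C \<and> pth cs (Suc k) C B" using h eqv[OF fC] by simp
        thus "\<exists>C. finite A \<and> finite C \<and> stepF cs A C \<and> pth cs (Suc k) C B"
          using fC Suc.prems(1) by blast
      qed
    qed
    finally show ?thesis .
  qed
  also have "\<dots> \<longleftrightarrow> R cs (Suc (Suc k)) A B" using KL[OF refl Suc(2) Suc(3)] .
  finally show ?case .
qed

theorem mainTheorem7:
  fixes cs :: "dconstr list" and n :: nat and S2 Sn :: "int set"
  assumes sat: "\<exists>u v. holds_conj cs u v"
    and le: "\<forall>u v. holds_conj cs u v \<longrightarrow> u \<le> v"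
    and refl: "\<forall>m. holds_conj cs m m"
    and n3: "n \<ge> 3"
    and fin2: "finite S2" and finn: "finite Sn"
  shows "(\<exists>S :: nat \<Rightarrow> int set.
            S 2 = S2 \<and> S n = Sn \<and> (\<forall>i\<in>{2..n}. finite (S i)) \<and>
            (\<forall>i\<in>{2..n-1}.
               (S i \<noteq> {} \<and> S i = S (Suc i) \<union> {Min (S i)}) \<and>
               (S i \<noteq> {} \<and> S (Suc i) \<noteq> {} \<and> Max (S i) = Max (S (Suc i))) \<and>
               (S i \<noteq> {} \<and> S (Suc i) \<noteq> {} \<and> holds_conj cs (Min (S i)) (Min (S (Suc i))))))
     \<longleftrightarrow>
         (Sn \<noteq> {} \<and> Sn \<subseteq> S2 \<and> card (S2 - Sn) \<le> n - 2 \<and>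
          (S2 - Sn \<noteq> {} \<longrightarrow> Max (S2 - Sn) < Min Sn) \<and>
          (\<forall>y z. succ_in ((S2 - Sn) \<union> {Min Sn}) y z \<longrightarrow> holds_conj cs y z))"
proof -
  define k where "k = n - 3"
  have k: "n - 2 = Suc k" using n3 unfolding k_def by arith
  have n2: "2 + (n - 2) = n" using n3 by simp
  have "(\<exists>S :: nat \<Rightarrow> int set.
            S 2 = S2 \<and> S n = Sn \<and> (\<forall>i\<in>{2..n}. finite (S i)) \<and>
            (\<forall>i\<in>{2..n-1}.
               (S i \<noteq> {} \<and> S i = S (Suc i) \<union> {Min (S i)}) \<and>
               (S i \<noteq> {} \<and> S (Suc i) \<noteq> {} \<and> Max (S i) = Max (S (Suc i))) \<and>
               (S i \<noteq> {} \<and> S (Suc i) \<noteq> {} \<and> holds_conj cs (Min (S i)) (Min (S (Suc i))))))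
     \<longleftrightarrow> pth cs (n - 2) S2 Sn"
    using path_pth[of 2 S2 "n - 2" Sn cs, unfolded n2 stepF_def] by simp
  also have "\<dots> \<longleftrightarrow> R cs (n - 2) S2 Sn" unfolding k using pth_R[OF refl fin2 finn] .
  finally show ?thesis unfolding R_def .
qed

end
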